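(* Let $E$ be a finite-dimensional real affine space, let $\lambda$ be a positive Borel measure on $E$, and let $\mathcal{H}$ be a nonempty subset of $G(E)$ such that $\int e^{h}\,d\lambda=1$ for all $h\in\mathcal{H}$. Let $\overline{\mathcal{H}}$ be the closure of $\mathcal{H}$ in $G(E)$. Then for every $x\in E$ there exists $\bar h\in\overline{\mathcal{H}}$ with $\bar h(x)=\sup_{h\in\mathcal{H}}h(x)$; that is, maximum likelihood estimates always exist in $\overline{\mathcal{H}}$.
   Context: $G(E)$ is the set of generalized affine functions on $E$ (functions $E\to\mathbb{R}\cup\{\pm\infty\}$ that are both convex and concave in the extended-real-valued sense), with the topology of pointwise convergence. Here $e^{+\infty}=+\infty$, $e^{-\infty}=0$. *)

theory Defs
  imports "HOL-Analysis.Analysis"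
begin

definition ext_convex :: "('a::real_vector \<Rightarrow> ereal) \<Rightarrow> bool" where
  "ext_convex f \<longleftrightarrow> convex {(x, \<mu>::real). f x \<le> ereal \<mu>}"

definition ext_concave :: "('a::real_vector \<Rightarrow> ereal) \<Rightarrow> bool" where
  "ext_concave f \<longleftrightarrow> convex {(x, \<mu>::real). ereal \<mu> \<le> f x}"

definition gen_affine :: "('a::real_vector \<Rightarrow> ereal) set" where
  "gen_affine = {f. ext_convex f \<and> ext_concave f}"

fun eexp :: "ereal \<Rightarrow> ennreal" where
  "eexp (ereal r) = ennreal (exp r)"
| "eexp PInfty = \<infinity>"
| "eexp MInfty = 0"

end

theory Submission
  imports Defs
begin

lemma ext_convex_iff:
  "ext_convex (f::'a::real_vector \<Rightarrow> ereal) \<longleftrightarrow> (\<forall>x y a b t. 0 \<le> t \<longrightarrow> t \<le> 1 \<longrightarrow> f x < ereal a \<longrightarrow> f y < ereal b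
     \<longrightarrow> f ((1-t) *\<^sub>R x + t *\<^sub>R y) \<le> ereal ((1-t)*a + t*b))"
  (is "_ \<longleftrightarrow> ?R")
proof
  assume "ext_convex f"
  then have c: "\<And>x y a b t. 0 \<le> t \<Longrightarrow> t \<le> 1 \<Longrightarrow> f x \<le> ereal a \<Longrightarrow> f y \<le> ereal b
     \<Longrightarrow> f ((1-t) *\<^sub>R x + t *\<^sub>R y) \<le> ereal ((1-t)*a + t*b)"
    unfolding ext_convex_def convex_alt by fastforce
  show ?R using c by (meson less_imp_le)
next
  assume R: ?R
  show "ext_convex f"
    unfolding ext_convex_def convex_alt
  proof (clarsimp)
    fix x a y b t :: real
    fix x y :: 'a
    fix a b t :: real
    assume h: "f x \<le> ereal a" "f y \<le> ereal b" "0 \<le> t" "t \<le> 1"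
    show "f ((1-t) *\<^sub>R x + t *\<^sub>R y) \<le> ereal ((1-t)*a + t*b)"
    proof (rule ereal_le_epsilon2)
      fix e :: real assume "0 < e"
      then have "ereal a < ereal (a+e)" "ereal b < ereal (b+e)" by simp_all
      then have "f x < ereal (a+e)" "f y < ereal (b+e)" using h
        by (meson order.strict_trans1)+
      then have "f ((1-t) *\<^sub>R x + t *\<^sub>R y) \<le> ereal ((1-t)*(a+e) + t*(b+e))"
        using R h by blast
      also have "(1-t)*(a+e) + t*(b+e) = ((1-t)*a + t*b) + e" by algebra
      finally show "f ((1-t) *\<^sub>R x + t *\<^sub>R y) \<le> ereal ((1-t)*a + t*b) + ereal e" by simp
    qed
  qed
qed

lemma ext_concave_iff:
  "ext_concave (f::'a::real_vector \<Rightarrow> ereal) \<longleftrightarrow> (\<forall>x y a b t. 0 \<le> t \<longrightarrow> t \<le> 1 \<longrightarrow> ereal a < f x \<longrightarrow> ereal b < f y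
     \<longrightarrow> ereal ((1-t)*a + t*b) \<le> f ((1-t) *\<^sub>R x + t *\<^sub>R y))"
  (is "_ \<longleftrightarrow> ?R")
proof
  assume "ext_concave f"
  then have c: "\<And>x y a b t. 0 \<le> t \<Longrightarrow> t \<le> 1 \<Longrightarrow> ereal a \<le> f x \<Longrightarrow> ereal b \<le> f y
     \<Longrightarrow> ereal ((1-t)*a + t*b) \<le> f ((1-t) *\<^sub>R x + t *\<^sub>R y)"
    unfolding ext_concave_def convex_alt by fastforce
  show ?R using c by (meson less_imp_le)
next
  assume R: ?R
  show "ext_concave f"
    unfolding ext_concave_def convex_alt
  proof (clarsimp)
    fix x y :: 'a
    fix a b t :: real
    assume h: "ereal a \<le> f x" "ereal b \<le> f y" "0 \<le> t" "t \<le> 1"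
    show "ereal ((1-t)*a + t*b) \<le> f ((1-t) *\<^sub>R x + t *\<^sub>R y)"
    proof (rule ereal_le_epsilon2)
      fix e :: real assume "0 < e"
      then have "ereal (a-e) < ereal a" "ereal (b-e) < ereal b" by simp_all
      then have "ereal (a-e) < f x" "ereal (b-e) < f y" using h
        by (meson order.strict_trans2)+
      then have "ereal ((1-t)*(a-e) + t*(b-e)) \<le> f ((1-t) *\<^sub>R x + t *\<^sub>R y)"
        using R h by blast
      moreover have "(1-t)*(a-e) + t*(b-e) = ((1-t)*a + t*b) - e" by algebra
      ultimately have "ereal (((1-t)*a + t*b) - e) \<le> f ((1-t) *\<^sub>R x + t *\<^sub>R y)" by simp
      then have "ereal ((1-t)*a + t*b) \<le> f ((1-t) *\<^sub>R x + t *\<^sub>R y) + ereal e"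
        by (metis add.commute diff_add_cancel ereal_le_real ereal_minus(1) ereal_plus_eq_PInfty plus_ereal.simps(1) ereal_add_le_add_iff2 ereal_less_eq(3))
      then show "ereal ((1-t)*a + t*b) \<le> f ((1-t) *\<^sub>R x + t *\<^sub>R y) + ereal e" .
    qed
  qed
qed

lemma cont_app: "continuous_on UNIV (\<lambda>f::'a \<Rightarrow> ereal. f x)"
  by simp

lemma closed_gen_affine: "closed (gen_affine :: ('a::real_vector \<Rightarrow> ereal) set)"
proof -
  have "gen_affine = {f::'a \<Rightarrow> ereal. (\<forall>x y a b t. 0 \<le> t \<longrightarrow> t \<le> 1 \<longrightarrow> f x < ereal a \<longrightarrow> f y < ereal b
     \<longrightarrow> f ((1-t) *\<^sub>R x + t *\<^sub>R y) \<le> ereal ((1-t)*a + t*b)) \<and>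
     (\<forall>x y a b t. 0 \<le> t \<longrightarrow> t \<le> 1 \<longrightarrow> ereal a < f x \<longrightarrow> ereal b < f y
     \<longrightarrow> ereal ((1-t)*a + t*b) \<le> f ((1-t) *\<^sub>R x + t *\<^sub>R y))}"
    unfolding gen_affine_def ext_convex_iff ext_concave_iff by blast
  also have "closed \<dots>"
    by (intro closed_Collect_conj closed_Collect_all closed_Collect_imp open_Collect_const
        open_Collect_less closed_Collect_le continuous_on_const cont_app)
  finally show ?thesis .
qed

lemma compact_fun_ereal: "compact (UNIV :: ('a \<Rightarrow> ereal) set)"
proof -
  have "compact_space (euclidean :: ereal topology)"
    unfolding compact_space_def using compact_UNIV by simp
  then have "compact_space (product_topology (\<lambda>i. euclidean :: ereal topology) (UNIV :: 'a set))"
    using compact_space_product_topology by blast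
  then have "compact_space (euclidean :: ('a \<Rightarrow> ereal) topology)"
    by (simp add: euclidean_product_topology)
  then show ?thesis
    unfolding compact_space_def by simp
qed

theorem theorem4:
  fixes lam :: "'a::euclidean_space measure"
    and H :: "('a \<Rightarrow> ereal) set"
  assumes "sets lam = sets borel"
    and "H \<noteq> {}"
    and "H \<subseteq> gen_affine"
    and "\<And>h. h \<in> H \<Longrightarrow> (\<integral>\<^sup>+ y. eexp (h y) \<partial>lam) = 1"
  shows "\<forall>x. \<exists>hb \<in> closure H \<inter> gen_affine. hb x = (SUP h\<in>H. h x)"
proof
  fix x :: 'a
  define s where "s = (SUP h\<in>H. h x)"
  have cH: "closure H \<subseteq> gen_affine"
    using assms(3) closed_gen_affine closure_minimal by blast
  have "compact (closure H)"
    using compact_Int_closed[OF compact_fun_ereal closed_closure[of H]] by simp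
  then have "compact ((\<lambda>h. h x) ` closure H)"
    by (intro compact_continuous_image continuous_on_subset[OF cont_app]) auto
  then have cl: "closed ((\<lambda>h. h x) ` closure H)" by (rule compact_imp_closed)
  have ne: "(\<lambda>h. h x) ` closure H \<noteq> {}" using assms(2) closure_subset by blast
  define T where "T = Sup ((\<lambda>h. h x) ` closure H)"
  have "T \<in> (\<lambda>h. h x) ` closure H"
    unfolding T_def by (rule closed_contains_Sup_cl[OF cl ne])
  then obtain hb where hb: "hb \<in> closure H" "hb x = T" by blast
  have "s \<le> T" unfolding s_def T_def
    by (rule SUP_subset_mono[OF closure_subset]) simp
  moreover have "T \<le> s"
  proof -
    have "closed {f::'a \<Rightarrow> ereal. f x \<le> s}"
      by (intro closed_Collect_le continuous_on_const cont_app)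
    moreover have "H \<subseteq> {f. f x \<le> s}" unfolding s_def by (auto intro: SUP_upper)
    ultimately have "closure H \<subseteq> {f. f x \<le> s}" by (rule closure_minimal[rotated])
    then show ?thesis unfolding T_def by (auto intro!: Sup_least)
  qed
  ultimately show "\<exists>hb \<in> closure H \<inter> gen_affine. hb x = (SUP h\<in>H. h x)"
    using hb cH s_def by auto
qed

end
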